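(* Let $\mathcal H_{PT}$ and $\mathcal H_{CK}$ be the Hopf algebras described below and define $\mathrm{sk}$ on reduced plane trees by $\mathrm{sk}(|)=\emptyset$ for the single-leaf tree $|$ and, if the root of $t$ has children subtrees $t_1,\dots,t_n$ ($n\ge2$), $\mathrm{sk}(t)=B^+_{n-1}\big(\mathrm{sk}(t_1)\cdots\mathrm{sk}(t_n)\big)$. Then the algebra morphism $\mathrm{sk}:\mathcal H_{PT}\to\mathcal H_{CK}$ extending this map is a morphism of Hopf algebras.
   Context: A reduced plane tree is a rooted plane tree in which every internal vertex has at least two children. For a tree $t_0$ with $n$ leaves, $t_0\circ(t_1,\dots,t_n)$ is obtained by replacing the leaves of $t_0$, from left to right, by the trees $t_1,\dots,t_n$. $\mathcal H_{PT}$ is the free unital associative algebra over $\mathbb C$ generated by the reduced plane trees with at least two leaves, the single-leaf tree $|$ being identified with the unit (so a basis is given by plane forests, i.e. words of such trees), with coproduct defined on trees by $$\Delta(t)=\sum_{t=t_0\circ(t_1,\dots,t_n)} t_0\otimes (t_1\cdot t_2\cdots t_n),$$ the sum over all ways to write $t$ as such a composition ($t_0$ with $n$ leaves, $t_i$ arbitrary reduced plane trees including $|$), and extended as an algebra morphism. $\mathcal H_{CK}$ is the commutative polynomial algebra over $\mathbb C$ on the set of (non-plane) rooted trees whose vertices are decorated by positive integers; its monomials are forests and its unit is the empty forest $\emptyset$. For $n\ge1$ and a forest $F$, $B_n^+(F)$ is the rooted tree with a new root decorated by $n$ joined to the roots of the trees of $F$ ($B_n^+(\emptyset)$ is a single vertex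 decorated $n$). The coproduct of $\mathcal H_{CK}$ is the algebra morphism defined by $\Delta(\emptyset)=\emptyset\otimes\emptyset$ and $\Delta(B_n^+(F))=\emptyset\otimes B_n^+(F)+(B_n^+\otimes\mathrm{Id})\circ\Delta(F)$. *)

theory Defs
  imports Complex_Main "HOL-Library.Multiset" "HOL-Library.Poly_Mapping" "HOL-Library.Product_Plus"
begin

datatype ptree = PLeaf | PNode "ptree list"

fun reduced :: "ptree \<Rightarrow> bool" where
  "reduced PLeaf = True"
| "reduced (PNode cs) = (2 \<le> length cs \<and> (\<forall>c\<in>set cs. reduced c))"

fun nleaves :: "ptree \<Rightarrow> nat" where
  "nleaves PLeaf = 1"
| "nleaves (PNode cs) = sum_list (map nleaves cs)"

text \<open>graft t0 ts = t0 o (t_1,...,t_n): replace the leaves of t0, from left to right,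
  by the trees in ts (meaningful when length ts = nleaves t0).\<close>
fun graft :: "ptree \<Rightarrow> ptree list \<Rightarrow> ptree"
and graft_list :: "ptree list \<Rightarrow> ptree list \<Rightarrow> ptree list" where
  "graft PLeaf ts = hd ts"
| "graft (PNode cs) ts = PNode (graft_list cs ts)"
| "graft_list [] ts = []"
| "graft_list (c # cs) ts = graft c (take (nleaves c) ts) # graft_list cs (drop (nleaves c) ts)"

text \<open>Basis of H_PT: plane forests = words of reduced trees with at least two leaves.\<close>
definition pforest :: "ptree list \<Rightarrow> bool" where
  "pforest w \<longleftrightarrow> (\<forall>t\<in>set w. reduced t \<and> t \<noteq> PLeaf)"

definition HPT :: "(ptree list \<Rightarrow>\<^sub>0 complex) set" where
  "HPT = {x. \<forall>w\<in>Poly_Mapping.keys x. pforest w}"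

text \<open>A reduced tree seen as an element of H_PT (the single leaf is the unit, i.e. the empty word).\<close>
fun forest_of :: "ptree \<Rightarrow> ptree list" where
  "forest_of PLeaf = []"
| "forest_of (PNode cs) = [PNode cs]"

definition mulPT :: "(ptree list \<Rightarrow>\<^sub>0 complex) \<Rightarrow> (ptree list \<Rightarrow>\<^sub>0 complex) \<Rightarrow> (ptree list \<Rightarrow>\<^sub>0 complex)" where
  "mulPT x y = (\<Sum>u\<in>Poly_Mapping.keys x. \<Sum>v\<in>Poly_Mapping.keys y. Poly_Mapping.single (u @ v) (Poly_Mapping.lookup x u * Poly_Mapping.lookup y v))"

text \<open>Product of H_PT \<otimes> H_PT, with basis pairs of plane forests.\<close>
definition mulPT2 :: "(ptree list \<times> ptree list \<Rightarrow>\<^sub>0 complex) \<Rightarrow> (ptree list \<times> ptree list \<Rightarrow>\<^sub>0 complex)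
    \<Rightarrow> (ptree list \<times> ptree list \<Rightarrow>\<^sub>0 complex)" where
  "mulPT2 X Y = (\<Sum>p\<in>Poly_Mapping.keys X. \<Sum>q\<in>Poly_Mapping.keys Y.
      Poly_Mapping.single (fst p @ fst q, snd p @ snd q) (Poly_Mapping.lookup X p * Poly_Mapping.lookup Y q))"

definition decomps :: "ptree \<Rightarrow> (ptree \<times> ptree list) set" where
  "decomps t = {(t0, ts). reduced t0 \<and> (\<forall>s\<in>set ts. reduced s) \<and>
                          length ts = nleaves t0 \<and> graft t0 ts = t}"

definition DeltaPT_tree :: "ptree \<Rightarrow> (ptree list \<times> ptree list \<Rightarrow>\<^sub>0 complex)" where
  "DeltaPT_tree t = (\<Sum>d\<in>decomps t.
      Poly_Mapping.single (forest_of (fst d), concat (map forest_of (snd d))) 1)"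

definition DeltaPT_forest :: "ptree list \<Rightarrow> (ptree list \<times> ptree list \<Rightarrow>\<^sub>0 complex)" where
  "DeltaPT_forest w = foldr (\<lambda>t acc. mulPT2 (DeltaPT_tree t) acc) w (Poly_Mapping.single ([], []) 1)"

definition DeltaPT :: "(ptree list \<Rightarrow>\<^sub>0 complex) \<Rightarrow> (ptree list \<times> ptree list \<Rightarrow>\<^sub>0 complex)" where
  "DeltaPT x = (\<Sum>w\<in>Poly_Mapping.keys x. Poly_Mapping.map (\<lambda>c. Poly_Mapping.lookup x w * c) (DeltaPT_forest w))"

definition epsPT :: "(ptree list \<Rightarrow>\<^sub>0 complex) \<Rightarrow> complex" where
  "epsPT x = Poly_Mapping.lookup x []"

text \<open>Non-plane rooted trees with vertices decorated by naturals; children form a multiset.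
  Forests are multisets of trees (monomials of the polynomial algebra).\<close>
datatype dtree = Bplus nat "dtree multiset"

text \<open>H_CK = polynomial algebra on trees = finitely supported functions on forests with
  convolution product; H_CK \<otimes> H_CK has basis pairs of forests.\<close>
type_synonym HCK = "dtree multiset \<Rightarrow>\<^sub>0 complex"
type_synonym HCK2 = "(dtree multiset \<times> dtree multiset) \<Rightarrow>\<^sub>0 complex"

definition Bplus_left :: "nat \<Rightarrow> HCK2 \<Rightarrow> HCK2" where
  "Bplus_left n X = (\<Sum>p\<in>Poly_Mapping.keys X. Poly_Mapping.single ({#Bplus n (fst p)#}, snd p) (Poly_Mapping.lookup X p))"

function DeltaCK_tree :: "dtree \<Rightarrow> HCK2" where
  "DeltaCK_tree (Bplus n F) =
     Poly_Mapping.single ({#}, {#Bplus n F#}) 1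
     + Bplus_left n (prod_mset (image_mset DeltaCK_tree F))"
  by pat_completeness auto
termination
proof (relation "measure size")
  fix n and F :: "dtree multiset" and z assume "z \<in># F"
  then show "(z, Bplus n F) \<in> measure size"
    by (induct F) (auto simp: size_multiset_overloaded_def)
qed simp

definition DeltaCK_forest :: "dtree multiset \<Rightarrow> HCK2" where
  "DeltaCK_forest F = prod_mset (image_mset DeltaCK_tree F)"

definition DeltaCK :: "HCK \<Rightarrow> HCK2" where
  "DeltaCK y = (\<Sum>F\<in>Poly_Mapping.keys y. Poly_Mapping.map (\<lambda>c. Poly_Mapping.lookup y F * c) (DeltaCK_forest F))"

definition epsCK :: "HCK \<Rightarrow> complex" where
  "epsCK y = Poly_Mapping.lookup y {#}"

fun sk_tree :: "ptree \<Rightarrow> dtree multiset" where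
  "sk_tree PLeaf = {#}"
| "sk_tree (PNode ts) = {#Bplus (length ts - 1) (sum_list (map sk_tree ts))#}"

definition sk_forest :: "ptree list \<Rightarrow> dtree multiset" where
  "sk_forest w = sum_list (map sk_tree w)"

definition sk :: "(ptree list \<Rightarrow>\<^sub>0 complex) \<Rightarrow> HCK" where
  "sk x = (\<Sum>w\<in>Poly_Mapping.keys x. Poly_Mapping.single (sk_forest w) (Poly_Mapping.lookup x w))"

definition sk2 :: "(ptree list \<times> ptree list \<Rightarrow>\<^sub>0 complex) \<Rightarrow> HCK2" where
  "sk2 X = (\<Sum>p\<in>Poly_Mapping.keys X.
      Poly_Mapping.single (sk_forest (fst p), sk_forest (snd p)) (Poly_Mapping.lookup X p))"

end

theory Submission imports Defs begin

definition lin :: "('a \<Rightarrow> 'b) \<Rightarrow> ('a \<Rightarrow>\<^sub>0 complex) \<Rightarrow> ('b \<Rightarrow>\<^sub>0 complex)" where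
  "lin f X = (\<Sum>p\<in>Poly_Mapping.keys X. Poly_Mapping.single (f p) (Poly_Mapping.lookup X p))"

abbreviation sc :: "complex \<Rightarrow> ('a \<Rightarrow>\<^sub>0 complex) \<Rightarrow> ('a \<Rightarrow>\<^sub>0 complex)" where
  "sc a P \<equiv> Poly_Mapping.map ((*) a) P"

lemma lookup_sc: "Poly_Mapping.lookup (sc a P) k = a * Poly_Mapping.lookup P k"
  by transfer (simp add: when_def)

lemma sc_add: "sc a (P + Q) = sc a P + sc a Q"
  by (rule poly_mapping_eqI) (simp add: lookup_sc lookup_add algebra_simps)

lemma sc_zero[simp]: "sc a 0 = 0"
  by (rule poly_mapping_eqI) (simp add: lookup_sc)

lemma sc_zero_left[simp]: "sc 0 P = 0"
  by (rule poly_mapping_eqI) (simp add: lookup_sc)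

lemma sc_sum: "sc a (sum g A) = (\<Sum>x\<in>A. sc a (g x))"
  by (induction A rule: infinite_finite_induct) (auto simp: sc_add)

lemma sc_single: "sc a (Poly_Mapping.single k c) = Poly_Mapping.single k (a * c)"
  by (rule poly_mapping_eqI) (simp add: lookup_sc lookup_single when_def)

lemma lin_superset:
  assumes "finite S" "Poly_Mapping.keys X \<subseteq> S"
  shows "lin f X = (\<Sum>p\<in>S. Poly_Mapping.single (f p) (Poly_Mapping.lookup X p))"
  unfolding lin_def using assms
  by (intro sum.mono_neutral_left) (auto simp: in_keys_iff)

lemma lin_add: "lin f (X + Y) = lin f X + lin f Y"
proof -
  let ?S = "Poly_Mapping.keys X \<union> Poly_Mapping.keys Y"
  have "lin f (X + Y) = (\<Sum>p\<in>?S. Poly_Mapping.single (f p) (Poly_Mapping.lookup (X+Y) p))"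
    by (rule lin_superset) (auto simp: keys_add)
  also have "\<dots> = (\<Sum>p\<in>?S. Poly_Mapping.single (f p) (Poly_Mapping.lookup X p))
     + (\<Sum>p\<in>?S. Poly_Mapping.single (f p) (Poly_Mapping.lookup Y p))"
    by (simp add: lookup_add single_add sum.distrib)
  also have "\<dots> = lin f X + lin f Y"
    by (simp add: lin_superset[of ?S X f] lin_superset[of ?S Y f])
  finally show ?thesis .
qed

lemma lin_zero[simp]: "lin f 0 = 0"
  by (simp add: lin_def)

lemma lin_single[simp]: "lin f (Poly_Mapping.single k c) = Poly_Mapping.single (f k) c"
  by (simp add: lin_def)

lemma lin_sum: "lin f (sum g A) = (\<Sum>x\<in>A. lin f (g x))"
  by (induction A rule: infinite_finite_induct) (auto simp: lin_add)

lemma expand: "X = (\<Sum>p\<in>Poly_Mapping.keys X. Poly_Mapping.single p (Poly_Mapping.lookup X p))"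
proof (rule poly_mapping_eqI)
  fix k
  show "Poly_Mapping.lookup X k = Poly_Mapping.lookup (\<Sum>p\<in>Poly_Mapping.keys X. Poly_Mapping.single p (Poly_Mapping.lookup X p)) k"
    by (simp add: lookup_sum lookup_single when_def in_keys_iff)
qed

lemma lin_sc: "lin f (sc a X) = sc a (lin f X)"
proof -
  have "sc a X = (\<Sum>p\<in>Poly_Mapping.keys X. Poly_Mapping.single p (a * Poly_Mapping.lookup X p))"
    by (subst expand) (simp add: sc_sum sc_single)
  then have "lin f (sc a X) = (\<Sum>p\<in>Poly_Mapping.keys X. Poly_Mapping.single (f p) (a * Poly_Mapping.lookup X p))"
    by (simp add: lin_sum)
  also have "\<dots> = sc a (lin f X)"
    by (simp add: lin_def sc_sum sc_single)
  finally show ?thesis .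
qed

definition Lin :: "('a \<Rightarrow> ('b \<Rightarrow>\<^sub>0 complex)) \<Rightarrow> ('a \<Rightarrow>\<^sub>0 complex) \<Rightarrow> ('b \<Rightarrow>\<^sub>0 complex)" where
  "Lin g X = (\<Sum>p\<in>Poly_Mapping.keys X. sc (Poly_Mapping.lookup X p) (g p))"

lemma sc_add_left: "sc (a + b) P = sc a P + sc b P"
  by (rule poly_mapping_eqI) (simp add: lookup_sc lookup_add algebra_simps)

lemma Lin_superset:
  assumes "finite S" "Poly_Mapping.keys X \<subseteq> S"
  shows "Lin g X = (\<Sum>p\<in>S. sc (Poly_Mapping.lookup X p) (g p))"
  unfolding Lin_def using assms
  by (intro sum.mono_neutral_left) (auto simp: in_keys_iff)

lemma Lin_add: "Lin g (X + Y) = Lin g X + Lin g Y"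
proof -
  let ?S = "Poly_Mapping.keys X \<union> Poly_Mapping.keys Y"
  have "Lin g (X + Y) = (\<Sum>p\<in>?S. sc (Poly_Mapping.lookup (X+Y) p) (g p))"
    by (rule Lin_superset) (auto simp: keys_add)
  also have "\<dots> = (\<Sum>p\<in>?S. sc (Poly_Mapping.lookup X p) (g p))
     + (\<Sum>p\<in>?S. sc (Poly_Mapping.lookup Y p) (g p))"
    by (simp add: lookup_add sc_add_left sum.distrib)
  also have "\<dots> = Lin g X + Lin g Y"
    by (simp add: Lin_superset[of ?S X g] Lin_superset[of ?S Y g])
  finally show ?thesis .
qed

lemma Lin_zero[simp]: "Lin g 0 = 0"
  by (simp add: Lin_def)

lemma Lin_single[simp]: "Lin g (Poly_Mapping.single k c) = sc c (g k)"
  by (simp add: Lin_def)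

lemma Lin_sum: "Lin g (sum h A) = (\<Sum>x\<in>A. Lin g (h x))"
  by (induction A rule: infinite_finite_induct) (auto simp: Lin_add)

lemma lin_mult:
  fixes f :: "'a \<Rightarrow> 'b::comm_monoid_add"
  assumes "\<And>p q. f (op p q) = f p + f q"
  shows "lin f (\<Sum>p\<in>Poly_Mapping.keys X. \<Sum>q\<in>Poly_Mapping.keys Y.
      Poly_Mapping.single (op p q) (Poly_Mapping.lookup X p * Poly_Mapping.lookup Y q))
    = lin f X * lin f Y"
proof -
  have "lin f X * lin f Y = (\<Sum>p\<in>Poly_Mapping.keys X. \<Sum>q\<in>Poly_Mapping.keys Y.
      Poly_Mapping.single (f p + f q) (Poly_Mapping.lookup X p * Poly_Mapping.lookup Y q))"
    by (simp add: lin_def sum_product mult_single)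
  then show ?thesis by (simp add: lin_sum assms)
qed


fun splitl :: "ptree list \<Rightarrow> ptree list \<Rightarrow> ptree list list" where
  "splitl [] ts = []"
| "splitl (d # ds) ts = take (nleaves d) ts # splitl ds (drop (nleaves d) ts)"

lemma graft_list_splitl: "graft_list ds ts = map (\<lambda>(d,x). graft d x) (zip ds (splitl ds ts))"
  by (induction ds arbitrary: ts) auto

lemma concat_splitl: "length ts = sum_list (map nleaves ds) \<Longrightarrow> concat (splitl ds ts) = ts"
  by (induction ds arbitrary: ts) auto

lemma len_splitl: "length ts = sum_list (map nleaves ds) \<Longrightarrow>
   list_all2 (\<lambda>d x. length x = nleaves d) ds (splitl ds ts)"
  by (induction ds arbitrary: ts) auto

lemma splitl_concat: "list_all2 (\<lambda>d x. length x = nleaves d) ds tss \<Longrightarrow> splitl ds (concat tss) = tss"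
  by (induction ds arbitrary: tss) (auto simp: list_all2_Cons1)

lemma set_splitl: "x \<in> set (splitl ds ts) \<Longrightarrow> set x \<subseteq> set ts"
  by (induction ds arbitrary: ts) (auto dest: in_set_takeD in_set_dropD)

lemma graft_list_concat: "list_all2 (\<lambda>d x. length x = nleaves d) ds tss \<Longrightarrow>
   graft_list ds (concat tss) = map (\<lambda>(d,x). graft d x) (zip ds tss)"
  by (induction ds arbitrary: tss) (auto simp: list_all2_Cons1)

lemma la2_set2: "list_all2 P xs ys \<Longrightarrow> y \<in> set ys \<Longrightarrow> \<exists>x\<in>set xs. P x y"
  by (induction xs arbitrary: ys) (force simp: list_all2_Cons1)+

lemma len_concat_la: "list_all2 (\<lambda>d x. length x = nleaves d) ds tss \<Longrightarrow> length (concat tss) = sum_list (map nleaves ds)"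
  by (induction ds arbitrary: tss) (auto simp: list_all2_Cons1)

definition Ch :: "('a \<Rightarrow> 'b set) \<Rightarrow> 'a list \<Rightarrow> 'b list set" where
  "Ch A cs = {ps. list_all2 (\<lambda>c p. p \<in> A c) cs ps}"

lemma Ch_Nil[simp]: "Ch A [] = {[]}"
  by (auto simp: Ch_def)

lemma Ch_Cons: "Ch A (c # cs) = (\<lambda>(p,ps). p # ps) ` (A c \<times> Ch A cs)"
  by (auto simp: Ch_def list_all2_Cons1)

lemma finite_Ch: "(\<forall>c\<in>set cs. finite (A c)) \<Longrightarrow> finite (Ch A cs)"
  by (induction cs) (auto simp: Ch_Cons)

lemma prod_sum_list:
  fixes g :: "'b \<Rightarrow> 'r::comm_semiring_1"
  assumes "\<forall>c\<in>set cs. finite (A c)"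
  shows "prod_list (map (\<lambda>c. sum g (A c)) cs) = (\<Sum>ps\<in>Ch A cs. prod_list (map g ps))"
  using assms
proof (induction cs)
  case Nil then show ?case by simp
next
  case (Cons c cs)
  have inj: "inj_on (\<lambda>(p,ps). p # ps) (A c \<times> Ch A cs)"
    by (auto simp: inj_on_def)
  have "prod_list (map (\<lambda>c. sum g (A c)) (c # cs)) = sum g (A c) * (\<Sum>ps\<in>Ch A cs. prod_list (map g ps))"
    using Cons by simp
  also have "\<dots> = (\<Sum>p\<in>A c. \<Sum>ps\<in>Ch A cs. g p * prod_list (map g ps))"
    by (simp add: sum_product)
  also have "\<dots> = (\<Sum>x\<in>A c \<times> Ch A cs. g (fst x) * prod_list (map g (snd x)))"
    by (simp add: sum.cartesian_product case_prod_beta)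
  also have "\<dots> = (\<Sum>ps\<in>Ch A (c # cs). prod_list (map g ps))"
    unfolding Ch_Cons by (subst sum.reindex[OF inj]) (simp add: case_prod_beta)
  finally show ?case .
qed

lemma decomps_PLeaf: "decomps PLeaf = {(PLeaf, [PLeaf])}"
proof -
  have "(t0, ts) \<in> decomps PLeaf \<Longrightarrow> t0 = PLeaf \<and> ts = [PLeaf]" for t0 ts
    by (cases t0; cases ts) (auto simp: decomps_def)
  then show ?thesis by (auto simp: decomps_def)
qed

definition hh :: "(ptree \<times> ptree list) list \<Rightarrow> ptree \<times> ptree list" where
  "hh ps = (PNode (map fst ps), concat (map snd ps))"

lemma decomps_len: "p \<in> decomps c \<Longrightarrow> length (snd p) = nleaves (fst p)"
  by (auto simp: decomps_def)

lemma decomps_node: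
  assumes "reduced (PNode cs)"
  shows "decomps (PNode cs) = insert (PLeaf, [PNode cs]) (hh ` Ch decomps cs)"
proof (intro equalityI subsetI)
  fix x assume x: "x \<in> decomps (PNode cs)"
  obtain t0 ts where xe: "x = (t0, ts)" by (cases x)
  show "x \<in> insert (PLeaf, [PNode cs]) (hh ` Ch decomps cs)"
  proof (cases t0)
    case PLeaf
    then show ?thesis using x xe by (cases ts) (auto simp: decomps_def)
  next
    case (PNode ds)
    have red: "reduced (PNode ds)" and rts: "\<forall>s\<in>set ts. reduced s"
      and len: "length ts = sum_list (map nleaves ds)"
      and gr: "graft_list ds ts = cs"
      using x xe PNode by (auto simp: decomps_def)
    define ps where "ps = zip ds (splitl ds ts)"
    have la: "list_all2 (\<lambda>d x. length x = nleaves d) ds (splitl ds ts)"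
      using len by (rule len_splitl)
    have lens: "length (splitl ds ts) = length ds"
      using la by (simp add: list_all2_lengthD)
    have "list_all2 (\<lambda>c p. p \<in> decomps c) cs ps"
    proof -
      have "cs = map (\<lambda>(d,x). graft d x) ps" using gr by (simp add: graft_list_splitl ps_def)
      moreover have "\<forall>p\<in>set ps. p \<in> decomps ((\<lambda>(d,x). graft d x) p)"
      proof
        fix p assume p: "p \<in> set ps"
        obtain d y where pe: "p = (d,y)" by (cases p)
        have dy: "d \<in> set ds" "y \<in> set (splitl ds ts)" using p pe by (auto simp: ps_def dest: set_zip_leftD set_zip_rightD)
        have "length y = nleaves d"
          using p pe la unfolding ps_def
          by (metis (mono_tags, lifting) case_prodD list_all2_iff)
        moreover have "reduced d" using dy red by auto
        moreover have "\<forall>s\<in>set y. reduced s" using set_splitl[OF dy(2)] rts by auto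
        ultimately show "p \<in> decomps ((\<lambda>(d,x). graft d x) p)" using pe by (simp add: decomps_def)
      qed
      ultimately show ?thesis by (simp add: list_all2_map1 list_all2_refl list.rel_refl_strong)
    qed
    moreover have "x = hh ps"
      using xe PNode lens concat_splitl[OF len] by (simp add: hh_def ps_def)
    ultimately show ?thesis by (auto simp: Ch_def)
  qed
next
  fix x assume x: "x \<in> insert (PLeaf, [PNode cs]) (hh ` Ch decomps cs)"
  show "x \<in> decomps (PNode cs)"
  proof (cases "x = (PLeaf, [PNode cs])")
    case True then show ?thesis using assms by (simp add: decomps_def)
  next
    case False
    then obtain ps where ps: "list_all2 (\<lambda>c p. p \<in> decomps c) cs ps" and xe: "x = hh ps"
      using x by (auto simp: Ch_def)
    have l: "length ps = length cs" using ps by (simp add: list_all2_lengthD)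
    have la: "list_all2 (\<lambda>d x. length x = nleaves d) (map fst ps) (map snd ps)"
      using ps by (auto simp: list_all2_conv_all_nth decomps_def)
    have "graft_list (map fst ps) (concat (map snd ps)) = cs"
      using ps by (simp add: graft_list_concat[OF la] zip_map_fst_snd)
        (auto simp: list_all2_conv_all_nth decomps_def intro!: nth_equalityI)
    moreover have "reduced (PNode (map fst ps))"
    proof -
      have "\<forall>p\<in>set ps. reduced (fst p)"
        using ps by (auto simp: list_all2_conv_all_nth decomps_def in_set_conv_nth split: prod.splits)
      then show ?thesis using assms l by auto
    qed
    moreover have "\<forall>s\<in>set (concat (map snd ps)). reduced s"
    proof -
      have "\<forall>p\<in>set ps. \<forall>s\<in>set (snd p). reduced s"
        using la2_set2[OF ps] by (auto simp: decomps_def)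
      then show ?thesis by auto
    qed
    moreover have "length (concat (map snd ps)) = sum_list (map nleaves (map fst ps))"
      using len_concat_la[OF la] by simp
    ultimately show ?thesis using xe by (simp add: hh_def decomps_def)
  qed
qed


definition Dsum :: "ptree \<Rightarrow> HCK2" where
  "Dsum t = (\<Sum>d\<in>decomps t. Poly_Mapping.single (sk_tree (fst d), sk_forest (snd d)) 1)"

lemma sk_forest_append[simp]: "sk_forest (u @ v) = sk_forest u + sk_forest v"
  by (simp add: sk_forest_def)

lemma sk_forest_Nil[simp]: "sk_forest [] = {#}"
  by (simp add: sk_forest_def)

lemma sk_forest_Cons[simp]: "sk_forest (t # u) = sk_tree t + sk_forest u"
  by (simp add: sk_forest_def)

lemma sk_forest_concat: "sk_forest (concat tss) = sum_list (map sk_forest tss)"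
  by (induction tss) auto

lemma sk_forest_of[simp]: "sk_forest (forest_of d) = sk_tree d"
  by (cases d) auto

lemma sk_forest_concat_of: "sk_forest (concat (map forest_of ts)) = sk_forest ts"
  by (induction ts) auto

lemma sk2_lin: "sk2 = lin (\<lambda>p. (sk_forest (fst p), sk_forest (snd p)))"
  by (auto simp: sk2_def lin_def fun_eq_iff)

lemma sk_lin: "sk = lin sk_forest"
  by (auto simp: sk_def lin_def fun_eq_iff)

lemma Bplus_left_lin: "Bplus_left n = lin (\<lambda>p. ({#Bplus n (fst p)#}, snd p))"
  by (auto simp: Bplus_left_def lin_def fun_eq_iff)

lemma sk2_DeltaPT_tree: "sk2 (DeltaPT_tree t) = Dsum t"
  by (simp add: sk2_lin DeltaPT_tree_def lin_sum Dsum_def sk_forest_concat_of)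

lemma DeltaCK_forest_add: "DeltaCK_forest (A + B) = DeltaCK_forest A * DeltaCK_forest B"
  by (simp add: DeltaCK_forest_def)

lemma DeltaCK_forest_empty[simp]: "DeltaCK_forest {#} = 1"
  by (simp add: DeltaCK_forest_def)

lemma DeltaCK_forest_sum_list: "DeltaCK_forest (sum_list (map f cs)) = prod_list (map (\<lambda>c. DeltaCK_forest (f c)) cs)"
  by (induction cs) (auto simp: DeltaCK_forest_add)

lemma single_00[simp]: "Poly_Mapping.single ({#}::dtree multiset, {#}::dtree multiset) (1::complex) = 1"
proof -
  have "({#}::dtree multiset, {#}::dtree multiset) = 0" by (simp add: zero_prod_def)
  then show ?thesis by (simp only: single_one)
qed

lemma prod_list_single:
  "prod_list (map (\<lambda>d. Poly_Mapping.single (sk_tree (fst d), sk_forest (snd d)) (1::complex)) ps)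
   = Poly_Mapping.single (sum_list (map (sk_tree \<circ> fst) ps), sum_list (map (sk_forest \<circ> snd) ps)) 1"
  by (induction ps) (auto simp: mult_single zero_prod_def)

lemma tree_main:
  "reduced t \<Longrightarrow> finite (decomps t) \<and> DeltaCK_forest (sk_tree t) = Dsum t"
proof (induction t)
  case PLeaf
  then show ?case by (simp add: decomps_PLeaf Dsum_def zero_prod_def)
next
  case (PNode cs)
  have IH: "\<forall>c\<in>set cs. finite (decomps c) \<and> DeltaCK_forest (sk_tree c) = Dsum c"
    using PNode by auto
  have fin: "\<forall>c\<in>set cs. finite (decomps c)" using IH by auto
  have dn: "decomps (PNode cs) = insert (PLeaf, [PNode cs]) (hh ` Ch decomps cs)"
    using PNode.prems by (rule decomps_node)
  have inj: "inj_on hh (Ch decomps cs)"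
  proof (rule inj_onI)
    fix ps qs assume ps: "ps \<in> Ch decomps cs" and qs: "qs \<in> Ch decomps cs" and e: "hh ps = hh qs"
    have f: "map fst ps = map fst qs" and c: "concat (map snd ps) = concat (map snd qs)"
      using e by (auto simp: hh_def)
    have "list_all2 (\<lambda>d x. length x = nleaves d) (map fst ps) (map snd ps)"
      using ps by (auto simp: Ch_def list_all2_conv_all_nth decomps_def split: prod.splits)
    from splitl_concat[OF this] have 1: "splitl (map fst ps) (concat (map snd ps)) = map snd ps" .
    have "list_all2 (\<lambda>d x. length x = nleaves d) (map fst qs) (map snd qs)"
      using qs by (auto simp: Ch_def list_all2_conv_all_nth decomps_def split: prod.splits)
    from splitl_concat[OF this] have 2: "splitl (map fst qs) (concat (map snd qs)) = map snd qs" .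
    have "map snd ps = map snd qs" using 1 2 f c by metis
    then show "ps = qs" using f by (simp add: pair_list_eqI)
  qed
  have notin: "(PLeaf, [PNode cs]) \<notin> hh ` Ch decomps cs" by (auto simp: hh_def)
  have finCh: "finite (Ch decomps cs)" using fin by (rule finite_Ch)
  have lenCh: "\<And>ps. ps \<in> Ch decomps cs \<Longrightarrow> length ps = length cs"
    by (auto simp: Ch_def list_all2_lengthD)
  define n where "n = length cs - 1"
  have "Dsum (PNode cs) = Poly_Mapping.single ({#}, sk_tree (PNode cs)) 1
      + (\<Sum>ps\<in>Ch decomps cs. Poly_Mapping.single (sk_tree (fst (hh ps)), sk_forest (snd (hh ps))) 1)"
    unfolding Dsum_def dn using notin finCh inj by (simp add: sum.reindex)
  also have "(\<Sum>ps\<in>Ch decomps cs. Poly_Mapping.single (sk_tree (fst (hh ps)), sk_forest (snd (hh ps))) 1)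
     = (\<Sum>ps\<in>Ch decomps cs. Poly_Mapping.single ({#Bplus n (sum_list (map (sk_tree \<circ> fst) ps))#}, sum_list (map (sk_forest \<circ> snd) ps)) (1::complex))"
    by (rule sum.cong) (auto simp: hh_def n_def lenCh sk_forest_concat o_def)
  also have "\<dots> = Bplus_left n (\<Sum>ps\<in>Ch decomps cs. prod_list (map (\<lambda>d. Poly_Mapping.single (sk_tree (fst d), sk_forest (snd d)) (1::complex)) ps))"
    by (simp add: Bplus_left_lin lin_sum prod_list_single)
  also have "(\<Sum>ps\<in>Ch decomps cs. prod_list (map (\<lambda>d. Poly_Mapping.single (sk_tree (fst d), sk_forest (snd d)) (1::complex)) ps))
     = prod_list (map Dsum cs)"
    unfolding Dsum_def by (rule prod_sum_list[symmetric]) (rule fin)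
  also have "prod_list (map Dsum cs) = prod_list (map (\<lambda>c. DeltaCK_forest (sk_tree c)) cs)"
    using IH by (intro arg_cong[where f=prod_list] map_cong) auto
  also have "\<dots> = prod_mset (image_mset DeltaCK_tree (sum_list (map sk_tree cs)))"
    unfolding DeltaCK_forest_sum_list[symmetric] by (simp only: DeltaCK_forest_def)
  finally have "Dsum (PNode cs) = DeltaCK_forest (sk_tree (PNode cs))"
    by (simp add: DeltaCK_forest_def n_def)
  then show ?case using dn finCh by simp
qed


lemma sk2_mul: "sk2 (mulPT2 X Y) = sk2 X * sk2 Y"
  unfolding mulPT2_def sk2_lin by (rule lin_mult) simp

lemma DeltaPT_forest_Nil[simp]: "DeltaPT_forest [] = Poly_Mapping.single ([], []) 1"
  by (simp add: DeltaPT_forest_def)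

lemma DeltaPT_forest_Cons: "DeltaPT_forest (t # w) = mulPT2 (DeltaPT_tree t) (DeltaPT_forest w)"
  by (simp add: DeltaPT_forest_def)

lemma forest_main: "pforest w \<Longrightarrow> DeltaCK_forest (sk_forest w) = sk2 (DeltaPT_forest w)"
proof (induction w)
  case Nil then show ?case by (simp add: sk2_lin)
next
  case (Cons t w)
  have "reduced t" "pforest w" using Cons.prems by (auto simp: pforest_def)
  then show ?case using Cons.IH tree_main[of t]
    by (simp add: DeltaPT_forest_Cons sk2_mul DeltaCK_forest_add sk2_DeltaPT_tree)
qed

lemma sk_tree_ne: "t \<noteq> PLeaf \<Longrightarrow> sk_tree t \<noteq> {#}"
  by (cases t) auto

lemma skf_empty: "pforest w \<Longrightarrow> sk_forest w = {#} \<longleftrightarrow> w = []"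
  by (cases w) (auto simp: pforest_def sk_tree_ne)

theorem mainTheorem8:
  shows "sk (Poly_Mapping.single [] 1) = 1
    \<and> (\<forall>x\<in>HPT. \<forall>y\<in>HPT. sk (mulPT x y) = sk x * sk y)
    \<and> (\<forall>x\<in>HPT. DeltaCK (sk x) = sk2 (DeltaPT x))
    \<and> (\<forall>x\<in>HPT. epsCK (sk x) = epsPT x)"
proof (intro conjI ballI)
  show "sk (Poly_Mapping.single [] 1) = 1" by (simp add: sk_lin)
next
  fix x y
  show "sk (mulPT x y) = sk x * sk y"
    unfolding mulPT_def sk_lin by (rule lin_mult) simp
next
  fix x assume x: "x \<in> HPT"
  have DCK: "DeltaCK = Lin DeltaCK_forest"
    by (simp add: DeltaCK_def Lin_def fun_eq_iff)
  have DPT: "DeltaPT = Lin DeltaPT_forest"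
    by (simp add: DeltaPT_def Lin_def fun_eq_iff)
  have "DeltaCK (sk x) = (\<Sum>w\<in>Poly_Mapping.keys x. sc (Poly_Mapping.lookup x w) (DeltaCK_forest (sk_forest w)))"
    by (simp add: DCK sk_lin lin_def Lin_sum)
  also have "\<dots> = (\<Sum>w\<in>Poly_Mapping.keys x. sc (Poly_Mapping.lookup x w) (sk2 (DeltaPT_forest w)))"
    using x by (intro sum.cong refl) (simp add: HPT_def forest_main)
  also have "\<dots> = sk2 (DeltaPT x)"
    by (simp add: DPT Lin_def sk2_lin lin_sum lin_sc)
  finally show "DeltaCK (sk x) = sk2 (DeltaPT x)" .
next
  fix x assume x: "x \<in> HPT"
  have "epsCK (sk x) = (\<Sum>w\<in>Poly_Mapping.keys x. (Poly_Mapping.lookup x w when sk_forest w = {#}))"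
    unfolding epsCK_def sk_lin lin_def lookup_sum lookup_single by (rule refl)
  also have "\<dots> = (\<Sum>w\<in>Poly_Mapping.keys x. (Poly_Mapping.lookup x w when w = []))"
    using x by (intro sum.cong refl) (simp add: HPT_def skf_empty)
  also have "\<dots> = Poly_Mapping.lookup x []"
    unfolding when_def sum.delta by (auto simp: in_keys_iff)
  finally show "epsCK (sk x) = epsPT x" by (simp add: epsPT_def)
qed

end
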